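(* The first difference sequence $\Delta(\mathbf{t}_{3/2})$ equals the Toeplitz word $\mathcal{T}(w)$ determined by the pattern $w=01?0?10??$ (a $(9,4)$-Toeplitz word).
   Context: The Thue--Morse word in base $3/2$ is the unique binary sequence $\mathbf{t}_{3/2}=(t_n)_{n\ge0}$ with $t_0=0$, $t_{3n}=t_{3n+1}=t_{2n}$ and $t_{3n+2}=1-t_{2n+1}$ for all $n\ge0$ (equivalently, $t_n$ is the digit sum modulo $2$ of the base-$3/2$ expansion of $n$, where $\langle 0\rangle$ is empty and $\langle n\rangle=\langle m\rangle d$ for $2n=3m+d$, $d\in\{0,1,2\}$). For a binary sequence $\mathbf{x}=(x_n)$, $\Delta(\mathbf{x})=(x_{n+1}-x_n\bmod 2)_{n\ge0}$. Toeplitz words: let $A$ be an alphabet and $?\notin A$; for a word $w\in A(A\cup\{?\})^*$ and an infinite word $\mathbf{u}$ over $A\cup\{?\}$, let $F_w(\mathbf{u})$ be the word obtained by replacing the successive occurrences of $?$ in $\mathbf{u}$ by the successive letters of $w^\omega=www\cdots$. Set $\mathcal{T}_0(w)=?^\omega$, $\mathcal{T}_{i+1}(w)=F_w(\mathcal{T}_i(w))$; the limit $\mathcal{T}(w)=\lim_i\mathcal{T}_i(w)\in A^{\mathbb{N}}$ exists and is the Toeplitz word determined by $w$; if $|w|=p$ and $w$ has $q$ occurrences of $?$, it is called a $(p,q)$-Toeplitz word. *)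

theory Defs
  imports Main
begin

text \<open>Digit sum of the base-3/2 expansion: the expansion of 0 is empty, and
  the expansion of n > 0 is that of m followed by digit d, where 2n = 3m + d,
  d \<in> {0,1,2}.\<close>
function ds32 :: "nat \<Rightarrow> nat" where
  "ds32 n = (if n = 0 then 0 else ds32 ((2 * n) div 3) + (2 * n) mod 3)"
  by auto
termination
  by (relation "measure id") auto

declare ds32.simps [simp del]

definition tm32 :: "nat \<Rightarrow> int" where
  "tm32 n = int (ds32 n mod 2)"

definition Delta :: "(nat \<Rightarrow> int) \<Rightarrow> nat \<Rightarrow> int" where
  "Delta x n = (x (Suc n) - x n) mod 2"

text \<open>Words over A \<union> {?} are represented with option: None is the hole ?.
  F_w u replaces the successive holes of u by the successive letters of w^\<omega>.\<close>
definition Fw :: "'a option list \<Rightarrow> (nat \<Rightarrow> 'a option) \<Rightarrow> nat \<Rightarrow> 'a option" where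
  "Fw w u n = (case u n of
       Some a \<Rightarrow> Some a
     | None \<Rightarrow> w ! (card {k. k < n \<and> u k = None} mod length w))"

definition toeplitz_approx :: "'a option list \<Rightarrow> nat \<Rightarrow> nat \<Rightarrow> 'a option" where
  "toeplitz_approx w i = (Fw w ^^ i) (\<lambda>_. None)"

text \<open>The limit (pointwise, i.e. in the product of discrete topologies) of
  the approximations T_i(w).\<close>
definition toeplitz :: "'a option list \<Rightarrow> nat \<Rightarrow> 'a" where
  "toeplitz w n = (THE a. \<exists>i0. \<forall>i\<ge>i0. toeplitz_approx w i n = Some a)"

end

theory Submission
  imports Defs
begin

lemma ds_eq:
  fixes m :: nat
  assumes "m > 0"
  shows "ds32 m = ds32 ((2*m) div 3) + (2*m) mod 3"
  using assms ds32.simps[of m] by simp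

lemma ds0: "ds32 (3*n) = ds32 (2*n)"
proof (cases "n = 0")
  case True then show ?thesis by simp
next
  case False
  have a: "(2*(3*n)) div 3 = 2*n" "(2*(3*n)) mod 3 = 0" by presburger+
  show ?thesis using ds_eq[of "3*n"] False a by simp
qed

lemma ds1: "ds32 (3*n+1) = ds32 (2*n) + 2"
proof -
  have a: "(2*(3*n+1)) div 3 = 2*n" "(2*(3*n+1)) mod 3 = 2" by presburger+
  show ?thesis using ds_eq[of "3*n+1"] a by simp
qed

lemma ds2: "ds32 (3*n+2) = ds32 (2*n+1) + 1"
proof -
  have a: "(2*(3*n+2)) div 3 = 2*n+1" "(2*(3*n+2)) mod 3 = 1" by presburger+
  show ?thesis using ds_eq[of "3*n+2"] a by simp
qed

definition E :: "nat \<Rightarrow> nat" where "E n = (ds32 (Suc n) + ds32 n) mod 2"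

lemma Delta_E: "Delta tm32 n = int (E n)"
proof -
  have "(int (ds32 (Suc n)) mod 2 - int (ds32 n) mod 2) mod 2
      = (int (ds32 (Suc n)) + int (ds32 n)) mod 2" by presburger
  then show ?thesis unfolding Delta_def tm32_def E_def by (simp add: zmod_int)
qed

lemma E0: "E (3*n) = 0"
proof -
  have "Suc (3*n) = 3*n+1" by simp
  then have "ds32 (Suc (3*n)) = ds32 (2*n) + 2" using ds1[of n] by simp
  then show ?thesis unfolding E_def ds0 by presburger
qed

lemma E1: "E (3*n+1) = (1 + E (2*n)) mod 2"
proof -
  have a: "Suc (3*n+1) = 3*n+2" "Suc (2*n) = 2*n+1" by simp_all
  have "E (3*n+1) = (ds32 (2*n+1) + 1 + (ds32 (2*n) + 2)) mod 2"
    unfolding E_def a ds2 ds1 by simp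
  moreover have "E (2*n) = (ds32 (2*n+1) + ds32 (2*n)) mod 2" unfolding E_def a by simp
  ultimately show ?thesis by presburger
qed

lemma E2: "E (3*n+2) = (1 + E (2*n+1)) mod 2"
proof -
  have a: "Suc (3*n+2) = 3*(n+1)" "Suc (2*n+1) = 2*(n+1)" by simp_all
  have "E (3*n+2) = (ds32 (2*(n+1)) + (ds32 (2*n+1) + 1)) mod 2"
    unfolding E_def a ds2 ds0 by simp
  moreover have "E (2*n+1) = (ds32 (2*(n+1)) + ds32 (2*n+1)) mod 2" unfolding E_def a by simp
  ultimately show ?thesis by presburger
qed

lemma E_lt: "E n < 2" unfolding E_def by simp

lemma E9:
  "E (9*k) = 0" "E (9*k+1) = 1" "E (9*k+3) = 0" "E (9*k+5) = 1" "E (9*k+6) = 0"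
  "E (9*k+2) = E (4*k)" "E (9*k+4) = E (4*k+1)" "E (9*k+7) = E (4*k+2)" "E (9*k+8) = E (4*k+3)"
proof -
  have l: "E (4*k) < 2" "E (4*k+1) < 2" "E (4*k+2) < 2" "E (4*k+3) < 2" by (simp_all add: E_lt)
  have f3: "E (6*k) = 0"
  proof -
    have q: "3*(2*k) = 6*k" by simp_all
    show ?thesis using E0[of "2*k"] unfolding q .
  qed
  have f4: "E (6*k+1) = (1 + E (4*k)) mod 2"
  proof -
    have q: "3*(2*k)+1 = 6*k+1" "2*(2*k) = 4*k" by simp_all
    show ?thesis using E1[of "2*k"] unfolding q .
  qed
  have f5: "E (6*k+2) = (1 + E (4*k+1)) mod 2"
  proof -
    have q: "3*(2*k)+2 = 6*k+2" "2*(2*k)+1 = 4*k+1" by simp_all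
    show ?thesis using E2[of "2*k"] unfolding q .
  qed
  have f6: "E (6*k+3) = 0"
  proof -
    have q: "3*(2*k+1) = 6*k+3" by simp_all
    show ?thesis using E0[of "2*k+1"] unfolding q .
  qed
  have f7: "E (6*k+4) = (1 + E (4*k+2)) mod 2"
  proof -
    have q: "3*(2*k+1)+1 = 6*k+4" "2*(2*k+1) = 4*k+2" by simp_all
    show ?thesis using E1[of "2*k+1"] unfolding q .
  qed
  have f8: "E (6*k+5) = (1 + E (4*k+3)) mod 2"
  proof -
    have q: "3*(2*k+1)+2 = 6*k+5" "2*(2*k+1)+1 = 4*k+3" by simp_all
    show ?thesis using E2[of "2*k+1"] unfolding q .
  qed
  have f9: "E (6*k+6) = 0"
  proof -
    have q: "3*(2*k+2) = 6*k+6" by simp_all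
    show ?thesis using E0[of "2*k+2"] unfolding q .
  qed
  have f10: "E (6*k+7) = (1 + E (4*k+4)) mod 2"
  proof -
    have q: "3*(2*k+2)+1 = 6*k+7" "2*(2*k+2) = 4*k+4" by simp_all
    show ?thesis using E1[of "2*k+2"] unfolding q .
  qed
  have f11: "E (6*k+8) = (1 + E (4*k+5)) mod 2"
  proof -
    have q: "3*(2*k+2)+2 = 6*k+8" "2*(2*k+2)+1 = 4*k+5" by simp_all
    show ?thesis using E2[of "2*k+2"] unfolding q .
  qed
  have f12: "E (9*k) = 0"
  proof -
    have q: "3*(3*k) = 9*k" by simp_all
    show ?thesis using E0[of "3*k"] unfolding q .
  qed
  have f13: "E (9*k+1) = (1 + E (6*k)) mod 2"
  proof -
    have q: "3*(3*k)+1 = 9*k+1" "2*(3*k) = 6*k" by simp_all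
    show ?thesis using E1[of "3*k"] unfolding q .
  qed
  have f14: "E (9*k+2) = (1 + E (6*k+1)) mod 2"
  proof -
    have q: "3*(3*k)+2 = 9*k+2" "2*(3*k)+1 = 6*k+1" by simp_all
    show ?thesis using E2[of "3*k"] unfolding q .
  qed
  have f15: "E (9*k+3) = 0"
  proof -
    have q: "3*(3*k+1) = 9*k+3" by simp_all
    show ?thesis using E0[of "3*k+1"] unfolding q .
  qed
  have f16: "E (9*k+4) = (1 + E (6*k+2)) mod 2"
  proof -
    have q: "3*(3*k+1)+1 = 9*k+4" "2*(3*k+1) = 6*k+2" by simp_all
    show ?thesis using E1[of "3*k+1"] unfolding q .
  qed
  have f17: "E (9*k+5) = (1 + E (6*k+3)) mod 2"
  proof -
    have q: "3*(3*k+1)+2 = 9*k+5" "2*(3*k+1)+1 = 6*k+3" by simp_all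
    show ?thesis using E2[of "3*k+1"] unfolding q .
  qed
  have f18: "E (9*k+6) = 0"
  proof -
    have q: "3*(3*k+2) = 9*k+6" by simp_all
    show ?thesis using E0[of "3*k+2"] unfolding q .
  qed
  have f19: "E (9*k+7) = (1 + E (6*k+4)) mod 2"
  proof -
    have q: "3*(3*k+2)+1 = 9*k+7" "2*(3*k+2) = 6*k+4" by simp_all
    show ?thesis using E1[of "3*k+2"] unfolding q .
  qed
  have f20: "E (9*k+8) = (1 + E (6*k+5)) mod 2"
  proof -
    have q: "3*(3*k+2)+2 = 9*k+8" "2*(3*k+2)+1 = 6*k+5" by simp_all
    show ?thesis using E2[of "3*k+2"] unfolding q .
  qed
  show "E (9*k) = 0" "E (9*k+1) = 1" "E (9*k+3) = 0" "E (9*k+5) = 1" "E (9*k+6) = 0"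
    "E (9*k+2) = E (4*k)" "E (9*k+4) = E (4*k+1)" "E (9*k+7) = E (4*k+2)" "E (9*k+8) = E (4*k+3)"
    using l f3 f4 f5 f6 f7 f8 f9 f10 f11 f12 f13 f14 f15 f16 f17 f18 f19 f20 by presburger+
qed


definition W :: "int option list" where
  "W = [Some 0, Some 1, None, Some 0, None, Some 1, Some 0, None, None]"

definition hh :: "nat \<Rightarrow> nat" where
  "hh m = 4 * (m div 9) + [0,0,0,1,1,2,2,2,3] ! (m mod 9)"

lemma split9:
  fixes m :: nat
  obtains k r where "m = 9*k + r" "r < 9"
  by (metis mod_less_divisor mult_div_mod_eq zero_less_numeral)

lemma hh_eq: "r < 9 \<Longrightarrow> hh (9*k+r) = 4*k + [0,0,0,1,1,2,2,2,3] ! r"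
  unfolding hh_def by simp

lemma r9: "(r::nat) < 9 \<Longrightarrow> r = 0 \<or> r = 1 \<or> r = 2 \<or> r = 3 \<or> r = 4 \<or> r = 5 \<or> r = 6 \<or> r = 7 \<or> r = 8"
  by arith

lemma W_Some': "r < 9 \<Longrightarrow> W ! r = Some a \<Longrightarrow> int (E (9*k+r)) = a"
  using E9[of k] unfolding W_def by (drule_tac r9) (elim disjE; simp)

lemma W_None': "r < 9 \<Longrightarrow> W ! r = None \<Longrightarrow> E (9*k+r) = E (hh (9*k+r)) \<and> hh (9*k+r) < 9*k+r"
  using E9[of k] unfolding W_def hh_eq by (drule_tac r9) (elim disjE; simp add: hh_eq)

lemma W_Some: "W ! (m mod 9) = Some a \<Longrightarrow> int (E m) = a"
proof -
  assume h: "W ! (m mod 9) = Some a"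
  obtain k r where m: "m = 9*k + r" "r < 9" by (rule split9)
  have mm: "m mod 9 = r" using m by simp
  have w: "W ! r = Some a" using h mm by simp
  show ?thesis using W_Some'[OF m(2) w, of k] m(1) by simp
qed

lemma W_None: "W ! (m mod 9) = None \<Longrightarrow> E m = E (hh m) \<and> hh m < m"
proof -
  assume h: "W ! (m mod 9) = None"
  obtain k r where m: "m = 9*k + r" "r < 9" by (rule split9)
  have mm: "m mod 9 = r" using m by simp
  have w: "W ! r = None" using h mm by simp
  show ?thesis using W_None'[OF m(2) w, of k] m(1) by simp
qed

lemma hh_Suc: "hh (Suc m) = hh m + (if W ! (m mod 9) = None then 1 else 0)"
proof -
  obtain k r where m: "m = 9*k + r" "r < 9" by (rule split9)
  have a: "hh m = 4*k + [0,0,0,1,1,2,2,2,3] ! r" using hh_eq[OF m(2)] m(1) by simp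
  have b: "hh (Suc m) = (if r = 8 then 4*(k+1) else 4*k + [0,0,0,1,1,2,2,2,3] ! (r+1))"
  proof (cases "r = 8")
    case True
    then have "Suc m = 9*(k+1) + 0" using m by simp
    then show ?thesis using hh_eq[of 0 "k+1"] True by simp
  next
    case False
    then have "Suc m = 9*k + (r+1)" "r+1 < 9" using m by simp_all
    then show ?thesis using hh_eq[of "r+1" k] False by simp
  qed
  have c: "m mod 9 = r" using m by simp
  show ?thesis unfolding a b c W_def using r9[OF m(2)]
    by (elim disjE) simp_all
qed


abbreviation T :: "nat \<Rightarrow> nat \<Rightarrow> int option" where
  "T i \<equiv> toeplitz_approx W i"

definition cnt :: "nat \<Rightarrow> nat \<Rightarrow> nat" where
  "cnt i n = card {k. k < n \<and> T i k = None}"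

lemma T0: "T 0 n = None" unfolding toeplitz_approx_def by simp

lemma TSuc: "T (Suc i) n = (case T i n of Some a \<Rightarrow> Some a | None \<Rightarrow> W ! (cnt i n mod 9))"
proof -
  have l: "length W = 9" by (simp add: W_def)
  show ?thesis unfolding toeplitz_approx_def cnt_def funpow.simps comp_def
    by (subst Fw_def) (simp only: l)
qed

lemma card_Suc_lemma:
  "card {k. k < Suc n \<and> P k} = card {k. k < n \<and> P k} + (if P n then 1 else 0)"
proof -
  have e: "{k. k < Suc n \<and> P k} = {k. k < n \<and> P k} \<union> (if P n then {n} else {})"
    by (auto simp: less_Suc_eq)
  show ?thesis unfolding e by auto
qed

lemma cnt_Suc_n: "cnt i (Suc n) = cnt i n + (if T i n = None then 1 else 0)"
  unfolding cnt_def by (rule card_Suc_lemma)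

lemma cnt0: "cnt 0 n = n"
  unfolding cnt_def T0 by simp

lemma T_None_Suc: "T (Suc i) n = None \<longleftrightarrow> T i n = None \<and> W ! (cnt i n mod 9) = None"
  unfolding TSuc by (cases "T i n") auto

lemma cnt_rel: "cnt (Suc i) n = hh (cnt i n)"
proof (induction n)
  case 0
  then show ?case by (simp add: cnt_def hh_def)
next
  case (Suc n)
  show ?case unfolding cnt_Suc_n Suc T_None_Suc
    by (cases "T i n") (simp_all add: hh_Suc)
qed

lemma inv: "(T i n = Some a \<longrightarrow> a = int (E n)) \<and> (T i n = None \<longrightarrow> E n = E (cnt i n))"
proof (induction i arbitrary: a)
  case 0
  then show ?case by (simp add: T0 cnt0)
next
  case (Suc i)
  show ?case
  proof (cases "T i n")
    case (Some b)
    then show ?thesis using Suc[of b] by (simp add: TSuc)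
  next
    case None
    then have en: "E n = E (cnt i n)" using Suc by simp
    show ?thesis
    proof (cases "W ! (cnt i n mod 9)")
      case None2: None
      then show ?thesis using None en W_None[OF None2] by (simp add: TSuc cnt_rel)
    next
      case (Some b)
      then show ?thesis using None en W_Some[OF Some] by (simp add: TSuc)
    qed
  qed
qed

lemma term_bound: "T i n = None \<Longrightarrow> cnt i n + i \<le> n"
proof (induction i)
  case 0
  then show ?case by (simp add: cnt0)
next
  case (Suc i)
  then have a: "T i n = None" "W ! (cnt i n mod 9) = None" using T_None_Suc by auto
  then show ?case using Suc.IH W_None[OF a(2)] cnt_rel[of i n] by simp
qed

lemma eventually_val: "i > n \<Longrightarrow> T i n = Some (int (E n))"
proof -
  assume "i > n"
  then have "T i n \<noteq> None" using term_bound[of i n] by auto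
  then obtain a where "T i n = Some a" by auto
  then show ?thesis using inv[of i n a] by simp
qed

theorem proposition11:
  shows "Delta tm32 =
    toeplitz [Some 0, Some 1, None, Some 0, None, Some 1, Some 0, None, None]"
proof
  fix n
  have "toeplitz W n = int (E n)"
    unfolding toeplitz_def
  proof (rule the_equality)
    show "\<exists>i0. \<forall>i\<ge>i0. T i n = Some (int (E n))"
      using eventually_val by (intro exI[of _ "Suc n"]) auto
  next
    fix a assume "\<exists>i0. \<forall>i\<ge>i0. T i n = Some a"
    then obtain i0 where h: "\<forall>i\<ge>i0. T i n = Some a" by auto
    have "T (max i0 (Suc n)) n = Some a" using h by simp
    moreover have "T (max i0 (Suc n)) n = Some (int (E n))" by (rule eventually_val) simp
    ultimately show "a = int (E n)" by simp
  qed
  then show "Delta tm32 n = toeplitz [Some 0, Some 1, None, Some 0, None, Some 1, Some 0, None, None] n"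
    unfolding Delta_E W_def by simp
qed

end
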